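(* Let $\phi$ be a scoring rule, $C=(C_1,\dots,C_K)$ with $C_k:=\mathbb{E}[Q_k\mid S_k]$, $\mathrm{GL}(S):=\mathbb{E}[d_\phi(C,Q)]$, and let $h_1,\dots,h_K:[0,1]\to\mathbb{R}$ be functions such that $\mathrm{GL}(S)=\sum_{k=1}^K\mathbb{E}[\mathrm{Var}_{h_k}(Q_k\mid S_k)]$. For each $k$ let $\mathscr{R}_k:\mathcal{X}\to\mathbb{N}$ be a partition of the feature space (write $\mathscr{R}_k$ for $\mathscr{R}_k(X)$) and let $S_{B_k}$ be a binned version of $S_k$. Define, with $T_k\in\{S_k,S_{B_k}\}$ (and writing $S$ resp. $S_B$ for the two choices), $\mathrm{GL}_{\mathrm{explained}}(\cdot):=\sum_k\mathbb{E}[\mathrm{Var}_{h_k}(\mathbb{E}[Q_k\mid T_k,\mathscr{R}_k]\mid T_k)]$, $\mathrm{GL}_{\mathrm{residual}}(\cdot):=\sum_k\mathbb{E}[\mathrm{Var}_{h_k}(Q_k\mid T_k,\mathscr{R}_k)]$, and also $\mathrm{GL}(S_B):=\sum_k\mathbb{E}[\mathrm{Var}_{h_k}(Q_k\mid S_{B_k})]$, $\mathrm{GL}_{\mathrm{induced}}(S,S_B):=\sum_k\mathbb{E}[\mathrm{Var}_{h_k}(C_k\mid S_{B_k})]$. Then: (1) $\mathrm{GL}(S)=\mathrm{GL}_{\mathrm{explained}}(S)+\mathrm{GL}_{\mathrm{residual}}(S)$; (2) $\mathrm{GL}(S_B)=\mathrm{GL}(S)+\mathrm{GL}_{\mathrm{induced}}(S,S_B)$;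 (3) $\mathrm{GL}(S)=\mathrm{GL}_{\mathrm{explained}}(S_B)-\mathrm{GL}_{\mathrm{induced}}(S,S_B)+\mathrm{GL}_{\mathrm{residual}}(S_B)$. Moreover, if every $h_k$ is convex, then $\mathrm{GL}(S)\ge\mathrm{GL}_{\mathrm{explained}}(S)\ge0$, $\mathrm{GL}_{\mathrm{induced}}(S,S_B)\ge0$, and $\mathrm{GL}(S)\ge\mathrm{GL}_{\mathrm{explained}}(S_B)-\mathrm{GL}_{\mathrm{induced}}(S,S_B)$.
   Context: Let $(X,Y)$ be jointly distributed with $X\in\mathcal{X}$ and $Y\in\{e_1,\dots,e_K\}$ (one-hot vectors of $\mathbb{R}^K$); $Q_k:=P(Y=e_k\mid X)$; $S=(S_1,\dots,S_K)=f(X)$ in the probability simplex for a classifier $f$. A scoring rule $\phi$ assigns a real number $\phi(p,e_k)$ to a score vector $p$ and label $e_k$; $s_\phi(P,q):=\sum_k\phi(P,e_k)q_k$, $d_\phi(P,q):=s_\phi(P,q)-s_\phi(q,q)$. For $f:\mathbb{R}\to\mathbb{R}$ and random variables $U,V$, $\mathrm{Var}_f(U\mid V):=\mathbb{E}[f(U)\mid V]-f(\mathbb{E}[U\mid V])$. A binned version of $S_k$: given a partition of $[0,1]$ into bins $\mathcal{B}_j$, $S_{B_k}$ equals $\mathbb{E}[S_k\mid S_k\in\mathcal{B}_j]$ on $\{S_k\in\mathcal{B}_j\}$. All required expectations are assumed to exist. *)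

theory Defs
  imports "HOL-Probability.Probability"
begin

definition cexp :: "'w measure \<Rightarrow> ('w \<Rightarrow> 'b) \<Rightarrow> 'b measure \<Rightarrow> ('w \<Rightarrow> real) \<Rightarrow> 'w \<Rightarrow> real" where
  "cexp M V N U = real_cond_exp M (vimage_algebra (space M) V N) U"

definition cvar :: "'w measure \<Rightarrow> (real \<Rightarrow> real) \<Rightarrow> ('w \<Rightarrow> real) \<Rightarrow> ('w \<Rightarrow> 'b) \<Rightarrow> 'b measure \<Rightarrow> 'w \<Rightarrow> real" where
  "cvar M h U V N \<omega> = cexp M V N (\<lambda>\<omega>'. h (U \<omega>')) \<omega> - h (cexp M V N U \<omega>)"

text \<open>Scoring rule quantities; labels are indexed by a finite type 'k (label k = one-hot e_k).\<close>
definition s_phi :: "(('k::finite \<Rightarrow> real) \<Rightarrow> 'k \<Rightarrow> real) \<Rightarrow> ('k \<Rightarrow> real) \<Rightarrow> ('k \<Rightarrow> real) \<Rightarrow> real" where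
  "s_phi phi P q = (\<Sum>k\<in>UNIV. phi P k * q k)"

definition d_phi :: "(('k::finite \<Rightarrow> real) \<Rightarrow> 'k \<Rightarrow> real) \<Rightarrow> ('k \<Rightarrow> real) \<Rightarrow> ('k \<Rightarrow> real) \<Rightarrow> real" where
  "d_phi phi P q = s_phi phi P q - s_phi phi q q"

text \<open>Binned version of T: the bins are the cells B_j = {t. idx t = j}; on the event
  {T \<in> B_j} the binned variable equals E[T | T \<in> B_j] = E[T 1_{T\<in>B_j}] / P(T \<in> B_j).\<close>
definition binned :: "'w measure \<Rightarrow> ('w \<Rightarrow> real) \<Rightarrow> (real \<Rightarrow> nat) \<Rightarrow> 'w \<Rightarrow> real" where
  "binned M T idx \<omega> =
     (let A = {\<omega>'\<in>space M. idx (T \<omega>') = idx (T \<omega>)}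
      in (\<integral>\<omega>'. indicator A \<omega>' * T \<omega>' \<partial>M) / measure M A)"

end

theory Submission
  imports Defs
begin


lemma subalg_vimage:
  assumes "V \<in> measurable M N"
  shows "subalgebra M (vimage_algebra (space M) V N)"
  unfolding subalgebra_def using sets_image_in_sets[of M "space M" V N] assms by simp

lemma subalg_nested:
  assumes V2: "V2 \<in> measurable M N2" and g: "g \<in> measurable N2 N1"
    and eq: "\<And>x. x \<in> space M \<Longrightarrow> V1 x = g (V2 x)"
  shows "subalgebra (vimage_algebra (space M) V2 N2) (vimage_algebra (space M) V1 N1)"
proof -
  have "V2 \<in> space M \<rightarrow> space N2" using V2 by (auto simp: measurable_def)
  then have m: "V2 \<in> measurable (vimage_algebra (space M) V2 N2) N2"
    by (rule measurable_vimage_algebra1)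
  have "(\<lambda>x. g (V2 x)) \<in> measurable (vimage_algebra (space M) V2 N2) N1"
    using measurable_comp[OF m g] by (simp add: comp_def)
  then have "V1 \<in> measurable (vimage_algebra (space M) V2 N2) N1"
    by (rule measurable_cong[THEN iffD1, rotated]) (simp add: eq)
  then show ?thesis unfolding subalgebra_def
    using sets_image_in_sets[of "vimage_algebra (space M) V2 N2" "space M" V1 N1] by simp
qed

lemma slope_mono:
  fixes h :: "real \<Rightarrow> real"
  assumes h: "convex_on {0..1} h"
  defines "phi \<equiv> \<lambda>x. Inf ((\<lambda>t. (h x - h t) / (x - t)) ` ({x<..} \<inter> {0..1}))"
  assumes xy: "x \<le> y" "0 < x" "y < 1"
  shows "phi x \<le> phi y"
proof (cases "x < y")
  case True
  have int: "interior {0..1::real} = {0<..<1}" by simp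
  have "h x + phi x * (y-x) \<le> h y"
    unfolding phi_def apply (rule convex_le_Inf_differential[OF h]) using xy by (auto simp: int)
  then have "phi x \<le> (h x - h y) / (x - y)"
    using True by (auto simp add: field_split_simps algebra_simps)
  moreover have "(h x - h y)/(x - y) \<le> phi y"
    unfolding phi_def
  proof (rule cInf_greatest)
    show "(\<lambda>t. (h y - h t) / (y - t)) ` ({y<..} \<inter> {0..1}) \<noteq> {}"
      using xy by (auto intro!: exI[of _ "(y+1)/2"])
  next
    fix s assume "s \<in> (\<lambda>t. (h y - h t) / (y - t)) ` ({y<..} \<inter> {0..1})"
    then obtain t where t: "t \<in> {0..1}" "y < t" and s: "s = (h y - h t) / (y - t)" by auto
    have "(h x - h y) / (x - y) \<le> (h x - h t) / (x - t)"
      apply (rule convex_on_slope_le(1)[OF h]) using True t xy by auto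
    also have "... \<le> (h y - h t) / (y - t)"
      apply (rule convex_on_slope_le(2)[OF h]) using True t xy by auto
    finally show "(h x - h y) / (x - y) \<le> s" using s by simp
  qed
  ultimately show ?thesis by auto
next
  case False
  then show ?thesis using xy by auto
qed

lemma support_line:
  fixes h :: "real \<Rightarrow> real"
  assumes h: "convex_on {0..1} h"
  defines "phi \<equiv> \<lambda>x. Inf ((\<lambda>t. (h x - h t) / (x - t)) ` ({x<..} \<inter> {0..1}))"
  assumes "0 < v" "v < 1" "u \<in> {0..1}"
  shows "h u \<ge> h v + phi v * (u - v)"
  unfolding phi_def apply (rule convex_le_Inf_differential[OF h]) using assms by auto



lemma jensen_trunc:
  fixes h :: "real \<Rightarrow> real"
  assumes M: "prob_space M" and sub: "subalgebra M F"
    and U[measurable]: "U \<in> borel_measurable M" and U01: "AE x in M. U x \<in> {0..1}"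
    and h: "convex_on {0..1} h"
    and iU: "integrable M (\<lambda>x. h (U x))"
    and iV: "integrable M (\<lambda>x. h (real_cond_exp M F U x))"
    and ab: "0 < a" "a \<le> b" "b < 1"
  shows "(\<integral>x. indicator {x\<in>space M. a \<le> real_cond_exp M F U x \<and> real_cond_exp M F U x \<le> b} x
             * h (real_cond_exp M F U x) \<partial>M)
       \<le> (\<integral>x. indicator {x\<in>space M. a \<le> real_cond_exp M F U x \<and> real_cond_exp M F U x \<le> b} x
             * h (U x) \<partial>M)"
proof -
  interpret prob_space M by (rule M)
  interpret finite_measure_subalgebra M F by unfold_locales (rule sub)
  define V where "V = real_cond_exp M F U"
  define B where "B = {x\<in>space M. a \<le> V x \<and> V x \<le> b}"
  have VF[measurable]: "V \<in> borel_measurable F" unfolding V_def by simp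
  have VM[measurable]: "V \<in> borel_measurable M" unfolding V_def by simp
  have intU: "integrable M U"
    by (rule integrable_const_bound[where B=1]) (use U01 in auto)
  have V01: "AE x in M. V x \<in> {0..1}"
  proof -
    have "AE x in M. V x \<ge> 0" unfolding V_def
      by (rule real_cond_exp_ge_c[OF intU]) (use U01 in auto)
    moreover have "AE x in M. V x \<le> 1" unfolding V_def
      by (rule real_cond_exp_le_c[OF intU]) (use U01 in auto)
    ultimately show ?thesis by auto
  qed
  have spF: "space F = space M" using sub by (simp add: subalgebra_def)
  have BF: "B \<in> sets F"
  proof -
    have "{x\<in>space F. a \<le> V x \<and> V x \<le> b} \<in> sets F" by measurable
    then show ?thesis unfolding B_def spF .
  qed
  have BM[measurable]: "B \<in> sets M" using BF sub by (auto simp: subalgebra_def)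
  define phi0 where "phi0 = (\<lambda>x. Inf ((\<lambda>t. (h x - h t) / (x - t)) ` ({x<..} \<inter> {0..1::real})))"
  define psi where "psi = (\<lambda>v. phi0 (max a (min b v)))"
  have psi_mono: "mono psi"
    unfolding psi_def phi0_def
    by (rule monoI, rule slope_mono[OF h]) (use ab in auto)
  have [measurable]: "psi \<in> borel_measurable borel" by (rule borel_measurable_mono[OF psi_mono])
  define K where "K = \<bar>phi0 a\<bar> + \<bar>phi0 b\<bar>"
  have psiK: "\<bar>psi v\<bar> \<le> K" for v
  proof -
    have "phi0 a \<le> psi v" unfolding psi_def phi0_def
      by (rule slope_mono[OF h]) (use ab in auto)
    moreover have "psi v \<le> phi0 b" unfolding psi_def phi0_def
      by (rule slope_mono[OF h]) (use ab in auto)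
    ultimately show ?thesis unfolding K_def by auto
  qed
  define w where "w = (\<lambda>x. indicator B x * psi (V x))"
  have wF[measurable]: "w \<in> borel_measurable F" unfolding w_def using BF by measurable
  have wM[measurable]: "w \<in> borel_measurable M" unfolding w_def by measurable
  have wK: "\<bar>w x\<bar> \<le> K" for x using psiK[of "V x"] psiK[of 0]
    unfolding w_def by (auto simp: indicator_def)
  have hUm[measurable]: "(\<lambda>x. h (U x)) \<in> borel_measurable M" using iU by auto
  have hVm[measurable]: "(\<lambda>x. h (V x)) \<in> borel_measurable M" using iV unfolding V_def by auto
  have iwU: "integrable M (\<lambda>x. w x * U x)"
  proof (rule integrable_const_bound[where B=K])
    show "AE x in M. norm (w x * U x) \<le> K" using U01
    proof eventually_elim
      case (elim x)
      have "\<bar>w x\<bar> * U x \<le> \<bar>w x\<bar>" by (rule mult_left_le) (use elim in auto)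
      then show ?case using wK[of x] elim by (simp add: abs_mult)
    qed
  qed simp
  have iwV: "integrable M (\<lambda>x. w x * V x)"
  proof (rule integrable_const_bound[where B=K])
    show "AE x in M. norm (w x * V x) \<le> K" using V01
    proof eventually_elim
      case (elim x)
      have "\<bar>w x\<bar> * V x \<le> \<bar>w x\<bar>" by (rule mult_left_le) (use elim in auto)
      then show ?case using wK[of x] elim by (simp add: abs_mult)
    qed
  qed simp
  have eq: "(\<integral>x. w x * V x \<partial>M) = (\<integral>x. w x * U x \<partial>M)"
    unfolding V_def by (rule real_cond_exp_intg(2)[OF iwU wF U])
  have iBU: "integrable M (\<lambda>x. indicator B x * h (U x))"
    using integrable_real_mult_indicator[OF BM iU] by (simp add: mult.commute)
  have iBV: "integrable M (\<lambda>x. indicator B x * h (V x))"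
    using integrable_real_mult_indicator[OF BM iV[folded V_def]] by (simp add: mult.commute)
  have main: "AE x in M. indicator B x * h (V x) + (w x * U x - w x * V x) \<le> indicator B x * h (U x)"
    using U01
  proof eventually_elim
    case (elim x)
    show ?case
    proof (cases "x \<in> B")
      case True
      then have v: "a \<le> V x" "V x \<le> b" unfolding B_def by auto
      have "psi (V x) = phi0 (V x)" unfolding psi_def using v by (simp add: max_def min_def)
      moreover have "h (V x) + phi0 (V x) * (U x - V x) \<le> h (U x)"
        unfolding phi0_def by (rule support_line[OF h]) (use v ab elim in auto)
      ultimately show ?thesis using True unfolding w_def by (simp add: algebra_simps)
    next
      case False
      then show ?thesis unfolding w_def by simp
    qed
  qed
  have "(\<integral>x. indicator B x * h (V x) + (w x * U x - w x * V x) \<partial>M) \<le> (\<integral>x. indicator B x * h (U x) \<partial>M)"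
    by (rule integral_mono_AE[OF _ iBU main]) (use iBV iwU iwV in auto)
  moreover have "(\<integral>x. indicator B x * h (V x) + (w x * U x - w x * V x) \<partial>M) = (\<integral>x. indicator B x * h (V x) \<partial>M)"
    using iBV iwU iwV eq by simp
  ultimately show ?thesis unfolding B_def V_def by simp
qed



lemma trunc_lim:
  fixes v c :: real
  shows "(\<lambda>n::nat. (if 1/(real n+3) \<le> v \<and> v \<le> 1 - 1/(real n+3) then 1 else 0) * c)
           \<longlonglongrightarrow> (if 0 < v \<and> v < 1 then 1 else 0) * c"
proof (cases "0 < v \<and> v < 1")
  case True
  then have "0 < min v (1 - v)" by auto
  from reals_Archimedean[OF this] obtain N where N: "inverse (real (Suc N)) < min v (1 - v)" by auto
  have "eventually (\<lambda>n::nat. (if 1/(real n+3) \<le> v \<and> v \<le> 1 - 1/(real n+3) then 1 else 0) * c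
           = (if 0 < v \<and> v < 1 then 1 else 0) * c) sequentially"
  proof (rule eventually_sequentiallyI[of N])
    fix n assume "N \<le> n"
    have "1/(real n+3) \<le> inverse (real (Suc N))"
      using \<open>N \<le> n\<close> by (simp add: field_simps)
    then show "(if 1/(real n+3) \<le> v \<and> v \<le> 1 - 1/(real n+3) then 1 else 0) * c
           = (if 0 < v \<and> v < 1 then 1 else 0) * c" using N True by auto
  qed
  then show ?thesis by (rule tendsto_eventually)
next
  case False
  have "(if 1/(real n+3) \<le> v \<and> v \<le> 1 - 1/(real n+3) then 1 else 0) = (0::real)" for n
  proof -
    have "0 < 1/(real n+3)" by simp
    then have "\<not> (1/(real n+3) \<le> v \<and> v \<le> 1 - 1/(real n+3))" using False by linarith
    then show ?thesis by simp
  qed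
  moreover have e: "(if 0 < v \<and> v < 1 then 1 else 0) = (0::real)" using False by simp
  ultimately show ?thesis by simp
qed

lemma jensen01:
  fixes h :: "real \<Rightarrow> real"
  assumes M: "prob_space M" and sub: "subalgebra M F"
    and U[measurable]: "U \<in> borel_measurable M" and U01: "AE x in M. U x \<in> {0..1}"
    and h: "convex_on {0..1} h"
    and iU: "integrable M (\<lambda>x. h (U x))"
    and iV: "integrable M (\<lambda>x. h (real_cond_exp M F U x))"
  shows "(\<integral>x. h (real_cond_exp M F U x) \<partial>M) \<le> (\<integral>x. h (U x) \<partial>M)"
proof -
  interpret prob_space M by (rule M)
  interpret finite_measure_subalgebra M F by unfold_locales (rule sub)
  define V where "V = real_cond_exp M F U"
  have VF[measurable]: "V \<in> borel_measurable F" unfolding V_def by simp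
  have VM[measurable]: "V \<in> borel_measurable M" unfolding V_def by simp
  have intU: "integrable M U"
    by (rule integrable_const_bound[where B=1]) (use U01 in auto)
  have V01: "AE x in M. V x \<in> {0..1}"
  proof -
    have "AE x in M. V x \<ge> 0" unfolding V_def
      by (rule real_cond_exp_ge_c[OF intU]) (use U01 in auto)
    moreover have "AE x in M. V x \<le> 1" unfolding V_def
      by (rule real_cond_exp_le_c[OF intU]) (use U01 in auto)
    ultimately show ?thesis by auto
  qed
  have spF: "space F = space M" using sub by (simp add: subalgebra_def)
  have hUm[measurable]: "(\<lambda>x. h (U x)) \<in> borel_measurable M" using iU by auto
  have hVm[measurable]: "(\<lambda>x. h (V x)) \<in> borel_measurable M" using iV unfolding V_def by auto
  have iV': "integrable M (\<lambda>x. h (V x))" using iV unfolding V_def .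
  define A0 where "A0 = {x\<in>space M. V x = 0}"
  define A1 where "A1 = {x\<in>space M. V x = 1}"
  define Am where "Am = {x\<in>space M. 0 < V x \<and> V x < 1}"
  have A0F: "A0 \<in> sets F"
  proof -
    have "{x\<in>space F. V x = 0} \<in> sets F" by measurable
    then show ?thesis unfolding A0_def spF .
  qed
  have A1F: "A1 \<in> sets F"
  proof -
    have "{x\<in>space F. V x = 1} \<in> sets F" by measurable
    then show ?thesis unfolding A1_def spF .
  qed
  have A0M[measurable]: "A0 \<in> sets M" using A0F sub by (auto simp: subalgebra_def)
  have A1M[measurable]: "A1 \<in> sets M" using A1F sub by (auto simp: subalgebra_def)
  have AmM[measurable]: "Am \<in> sets M" unfolding Am_def by measurable
  have iind: "integrable M (\<lambda>x. indicator A x * g x)" if "A \<in> sets M" "integrable M g" for A and g :: "_ \<Rightarrow> real"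
    using integrable_real_mult_indicator[OF that] by (simp add: mult.commute)
  have "(\<integral>x. indicator A0 x * V x \<partial>M) = (\<integral>x. indicator A0 x * U x \<partial>M)"
    unfolding V_def by (rule real_cond_exp_intg(2)) (use iind[OF A0M intU] A0F in auto)
  moreover have "(\<integral>x. indicator A0 x * V x \<partial>M) = 0"
    by (rule integral_eq_zero_AE) (auto simp: A0_def indicator_def)
  ultimately have "(\<integral>x. indicator A0 x * U x \<partial>M) = 0" by simp
  moreover have "AE x in M. 0 \<le> indicator A0 x * U x" using U01 by eventually_elim auto
  ultimately have "AE x in M. indicator A0 x * U x = 0"
    using integral_nonneg_eq_0_iff_AE[OF iind[OF A0M intU]] by simp
  then have U0: "AE x in M. x \<in> A0 \<longrightarrow> U x = 0" by eventually_elim (auto simp: indicator_def)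
  have iA1: "integrable M (\<lambda>x. indicator A1 x * (1::real))" using iind[OF A1M, of "\<lambda>_. 1"] by simp
  have "(\<integral>x. indicator A1 x * V x \<partial>M) = (\<integral>x. indicator A1 x * U x \<partial>M)"
    unfolding V_def by (rule real_cond_exp_intg(2)) (use iind[OF A1M intU] A1F in auto)
  moreover have "(\<integral>x. indicator A1 x * V x \<partial>M) = (\<integral>x. indicator A1 x * 1 \<partial>M)"
    by (rule Bochner_Integration.integral_cong) (auto simp: A1_def indicator_def)
  ultimately have "(\<integral>x. indicator A1 x * (1 - U x) \<partial>M) = 0"
    using iind[OF A1M intU] iA1 by (simp add: right_diff_distrib)
  moreover have "AE x in M. 0 \<le> indicator A1 x * (1 - U x)" using U01 by eventually_elim auto
  moreover have "integrable M (\<lambda>x. indicator A1 x * (1 - U x))"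
    using iind[OF A1M intU] iA1 by (simp add: right_diff_distrib)
  ultimately have "AE x in M. indicator A1 x * (1 - U x) = 0"
    using integral_nonneg_eq_0_iff_AE by blast
  then have U1: "AE x in M. x \<in> A1 \<longrightarrow> U x = 1" by eventually_elim (auto simp: indicator_def)
  define Bn where "Bn = (\<lambda>n::nat. {x\<in>space M. 1/(real n+3) \<le> V x \<and> V x \<le> 1 - 1/(real n+3)})"
  have Bn_ineq: "(\<integral>x. indicator (Bn n) x * h (V x) \<partial>M) \<le> (\<integral>x. indicator (Bn n) x * h (U x) \<partial>M)" for n
  proof -
    have "1/(real n+3) \<le> 1/3" by (simp add: field_simps)
    then have "1/(real n+3) \<le> 1 - 1/(real n+3)" by linarith
    then show ?thesis unfolding Bn_def V_def
      by (intro jensen_trunc[OF M sub U U01 h iU iV]) auto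
  qed
  have BnM[measurable]: "Bn n \<in> sets M" for n unfolding Bn_def by measurable
  have lim: "(\<lambda>n. \<integral>x. indicator (Bn n) x * g x \<partial>M) \<longlonglongrightarrow> (\<integral>x. indicator Am x * g x \<partial>M)"
    if ig: "integrable M g" for g :: "_ \<Rightarrow> real"
  proof (rule integral_dominated_convergence[where w="\<lambda>x. \<bar>g x\<bar>"])
    show "(\<lambda>x. indicator Am x * g x) \<in> borel_measurable M" using ig by measurable
    show "(\<lambda>x. indicator (Bn n) x * g x) \<in> borel_measurable M" for n using ig by measurable
    show "integrable M (\<lambda>x. \<bar>g x\<bar>)" using ig by auto
    show "AE x in M. norm (indicator (Bn n) x * g x) \<le> \<bar>g x\<bar>" for n
      by (auto simp: indicator_def)
    show "AE x in M. (\<lambda>n. indicator (Bn n) x * g x) \<longlonglongrightarrow> indicator Am x * g x"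
    proof (rule AE_I2)
      fix x assume x: "x \<in> space M"
      have "(\<lambda>n. indicator (Bn n) x * g x) = (\<lambda>n::nat. (if 1/(real n+3) \<le> V x \<and> V x \<le> 1 - 1/(real n+3) then 1 else 0) * g x)"
        using x by (auto simp: Bn_def indicator_def)
      moreover have "indicator Am x * g x = (if 0 < V x \<and> V x < 1 then 1 else 0) * g x"
        using x by (auto simp: Am_def indicator_def)
      ultimately show "(\<lambda>n. indicator (Bn n) x * g x) \<longlonglongrightarrow> indicator Am x * g x"
        using trunc_lim[of "V x" "g x"] by metis
    qed
  qed
  have mid: "(\<integral>x. indicator Am x * h (V x) \<partial>M) \<le> (\<integral>x. indicator Am x * h (U x) \<partial>M)"
    by (rule LIMSEQ_le[OF lim[OF iV'] lim[OF iU]]) (use Bn_ineq in auto)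
  have split: "AE x in M. h (V x) = indicator A0 x * h (V x) + indicator A1 x * h (V x) + indicator Am x * h (V x)"
    using V01 AE_space by eventually_elim (auto simp: A0_def A1_def Am_def indicator_def)
  have splitU: "AE x in M. h (U x) = indicator A0 x * h (V x) + indicator A1 x * h (V x) + indicator Am x * h (U x)"
    using V01 U0 U1 AE_space by eventually_elim (auto simp: A0_def A1_def Am_def indicator_def)
  have "(\<integral>x. h (V x) \<partial>M) = (\<integral>x. indicator A0 x * h (V x) + indicator A1 x * h (V x) + indicator Am x * h (V x) \<partial>M)"
    by (rule integral_cong_AE[OF _ _ split]) auto
  also have "\<dots> = (\<integral>x. indicator A0 x * h (V x) \<partial>M) + (\<integral>x. indicator A1 x * h (V x) \<partial>M) + (\<integral>x. indicator Am x * h (V x) \<partial>M)"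
    using iind[OF A0M iV'] iind[OF A1M iV'] iind[OF AmM iV'] by simp
  also have "\<dots> \<le> (\<integral>x. indicator A0 x * h (V x) \<partial>M) + (\<integral>x. indicator A1 x * h (V x) \<partial>M) + (\<integral>x. indicator Am x * h (U x) \<partial>M)"
    using mid by simp
  also have "\<dots> = (\<integral>x. indicator A0 x * h (V x) + indicator A1 x * h (V x) + indicator Am x * h (U x) \<partial>M)"
    using iind[OF A0M iV'] iind[OF A1M iV'] iind[OF AmM iU] by simp
  also have "\<dots> = (\<integral>x. h (U x) \<partial>M)"
    by (rule integral_cong_AE[OF _ _ splitU[THEN AE_mp, OF AE_I2], symmetric]) auto
  finally show ?thesis unfolding V_def .
qed



lemma int01:
  assumes M: "prob_space M" and U: "U \<in> borel_measurable M" and U01: "AE x in M. U x \<in> {0..1::real}"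
  shows "integrable M U"
proof -
  interpret prob_space M by (rule M)
  show ?thesis by (rule integrable_const_bound[where B=1]) (use U01 U in auto)
qed

lemma int_cvar:
  assumes M: "prob_space M" and V: "V \<in> measurable M N"
    and iU: "integrable M (\<lambda>x. h (U x))" and iC: "integrable M (\<lambda>x. h (cexp M V N U x))"
  shows "(\<integral>x. cvar M h U V N x \<partial>M) = (\<integral>x. h (U x) \<partial>M) - (\<integral>x. h (cexp M V N U x) \<partial>M)"
proof -
  interpret prob_space M by (rule M)
  interpret finite_measure_subalgebra M "vimage_algebra (space M) V N"
    by unfold_locales (rule subalg_vimage[OF V])
  have "(\<integral>x. cvar M h U V N x \<partial>M) = (\<integral>x. cexp M V N (\<lambda>w. h (U w)) x \<partial>M) - (\<integral>x. h (cexp M V N U x) \<partial>M)"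
    unfolding cvar_def
    by (rule Bochner_Integration.integral_diff) (use iC real_cond_exp_int(1)[OF iU] in \<open>auto simp: cexp_def\<close>)
  also have "(\<integral>x. cexp M V N (\<lambda>w. h (U w)) x \<partial>M) = (\<integral>x. h (U x) \<partial>M)"
    unfolding cexp_def by (rule real_cond_exp_int(2)[OF iU])
  finally show ?thesis .
qed

lemma cexp_tower:
  assumes M: "prob_space M" and V2: "V2 \<in> measurable M N2" and g: "g \<in> measurable N2 N1"
    and eq: "\<And>x. x \<in> space M \<Longrightarrow> V1 x = g (V2 x)" and U: "integrable M U"
  shows "AE x in M. cexp M V1 N1 (cexp M V2 N2 U) x = cexp M V1 N1 U x"
proof -
  interpret prob_space M by (rule M)
  have "(\<lambda>x. g (V2 x)) \<in> measurable M N1" using measurable_comp[OF V2 g] by (simp add: comp_def)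
  then have V1: "V1 \<in> measurable M N1"
    by (rule measurable_cong[THEN iffD1, rotated]) (simp add: eq)
  interpret finite_measure_subalgebra M "vimage_algebra (space M) V1 N1"
    by unfold_locales (rule subalg_vimage[OF V1])
  show ?thesis unfolding cexp_def
    by (rule real_cond_exp_nested_subalg[OF subalg_vimage[OF V2] subalg_nested[OF V2 g eq] U])
qed

lemma cexp_meas:
  assumes M: "prob_space M" and V: "V \<in> measurable M N"
  shows "cexp M V N U \<in> borel_measurable M"
proof -
  interpret prob_space M by (rule M)
  interpret finite_measure_subalgebra M "vimage_algebra (space M) V N"
    by unfold_locales (rule subalg_vimage[OF V])
  show ?thesis unfolding cexp_def by simp
qed

lemma cexp01:
  assumes M: "prob_space M" and V: "V \<in> measurable M N"
    and U: "U \<in> borel_measurable M" and U01: "AE x in M. U x \<in> {0..1::real}"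
  shows "AE x in M. cexp M V N U x \<in> {0..1}"
proof -
  interpret prob_space M by (rule M)
  interpret finite_measure_subalgebra M "vimage_algebra (space M) V N"
    by unfold_locales (rule subalg_vimage[OF V])
  have intU: "integrable M U" by (rule int01[OF M U U01])
  have "AE x in M. cexp M V N U x \<ge> 0" unfolding cexp_def
    by (rule real_cond_exp_ge_c[OF intU]) (use U01 in auto)
  moreover have "AE x in M. cexp M V N U x \<le> 1" unfolding cexp_def
    by (rule real_cond_exp_le_c[OF intU]) (use U01 in auto)
  ultimately show ?thesis by auto
qed

lemma jensen_cexp:
  fixes h :: "real \<Rightarrow> real"
  assumes M: "prob_space M" and V: "V \<in> measurable M N"
    and U: "U \<in> borel_measurable M" and U01: "AE x in M. U x \<in> {0..1}"
    and h: "convex_on {0..1} h"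
    and iU: "integrable M (\<lambda>x. h (U x))" and iC: "integrable M (\<lambda>x. h (cexp M V N U x))"
  shows "(\<integral>x. h (cexp M V N U x) \<partial>M) \<le> (\<integral>x. h (U x) \<partial>M)"
  using jensen01[OF M subalg_vimage[OF V] U U01 h iU] iC unfolding cexp_def by simp


theorem theorem3:
  fixes M :: "'w measure" and MX :: "'x measure"
    and X :: "'w \<Rightarrow> 'x" and Y :: "'w \<Rightarrow> 'k::finite"
    and f :: "'x \<Rightarrow> 'k \<Rightarrow> real"
    and phi :: "('k \<Rightarrow> real) \<Rightarrow> 'k \<Rightarrow> real"
    and h :: "'k \<Rightarrow> real \<Rightarrow> real"
    and R :: "'k \<Rightarrow> 'x \<Rightarrow> nat"
    and bin :: "'k \<Rightarrow> real \<Rightarrow> nat"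
  defines "S \<equiv> \<lambda>k \<omega>. f (X \<omega>) k"
  defines "Q \<equiv> \<lambda>k. cexp M X MX (\<lambda>\<omega>. if Y \<omega> = k then 1 else 0)"
  defines "C \<equiv> \<lambda>k. cexp M (S k) borel (Q k)"
  defines "SB \<equiv> \<lambda>k. binned M (S k) (bin k)"
  defines "QTR \<equiv> \<lambda>T k. cexp M (\<lambda>\<omega>. (T k \<omega>, R k (X \<omega>))) (borel \<Otimes>\<^sub>M count_space UNIV) (Q k)"
  defines "GL_S \<equiv> \<integral>\<omega>. d_phi phi (\<lambda>k. C k \<omega>) (\<lambda>k. Q k \<omega>) \<partial>M"
  defines "GL_SB \<equiv> \<Sum>k\<in>UNIV. \<integral>\<omega>. cvar M (h k) (Q k) (SB k) borel \<omega> \<partial>M"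
  defines "GL_exp \<equiv> \<lambda>T. \<Sum>k\<in>UNIV. \<integral>\<omega>. cvar M (h k) (QTR T k) (T k) borel \<omega> \<partial>M"
  defines "GL_res \<equiv> \<lambda>T. \<Sum>k\<in>UNIV. \<integral>\<omega>. cvar M (h k) (Q k) (\<lambda>\<omega>. (T k \<omega>, R k (X \<omega>)))
                          (borel \<Otimes>\<^sub>M count_space UNIV) \<omega> \<partial>M"
  defines "GL_ind \<equiv> \<Sum>k\<in>UNIV. \<integral>\<omega>. cvar M (h k) (C k) (SB k) borel \<omega> \<partial>M"
  assumes M: "prob_space M"
    and X_meas: "X \<in> measurable M MX"
    and Y_meas: "Y \<in> measurable M (count_space UNIV)"
    and simplex: "\<forall>x\<in>space MX. (\<forall>k. 0 \<le> f x k) \<and> (\<Sum>k\<in>UNIV. f x k) = 1"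
    and f_meas: "\<forall>k. (\<lambda>x. f x k) \<in> borel_measurable MX"
    and R_meas: "\<forall>k. R k \<in> measurable MX (count_space UNIV)"
    and bin_meas: "\<forall>k. bin k \<in> measurable borel (count_space UNIV)"
    and GL_decomp: "GL_S = (\<Sum>k\<in>UNIV. \<integral>\<omega>. cvar M (h k) (Q k) (S k) borel \<omega> \<partial>M)"
    and integr: "\<forall>k.
        integrable M (\<lambda>\<omega>. h k (Q k \<omega>)) \<and>
        integrable M (\<lambda>\<omega>. h k (C k \<omega>)) \<and>
        integrable M (\<lambda>\<omega>. h k (cexp M (SB k) borel (Q k) \<omega>)) \<and>
        integrable M (\<lambda>\<omega>. h k (QTR S k \<omega>)) \<and>
        integrable M (\<lambda>\<omega>. h k (QTR SB k \<omega>)) \<and>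
        integrable M (\<lambda>\<omega>. h k (cexp M (S k) borel (QTR S k) \<omega>)) \<and>
        integrable M (\<lambda>\<omega>. h k (cexp M (SB k) borel (QTR SB k) \<omega>)) \<and>
        integrable M (\<lambda>\<omega>. h k (cexp M (SB k) borel (C k) \<omega>))"
  shows "GL_S = GL_exp S + GL_res S
       \<and> GL_SB = GL_S + GL_ind
       \<and> GL_S = GL_exp SB - GL_ind + GL_res SB
       \<and> ((\<forall>k. convex_on {0..1} (h k)) \<longrightarrow>
            GL_S \<ge> GL_exp S \<and> GL_exp S \<ge> 0 \<and> GL_ind \<ge> 0 \<and> GL_S \<ge> GL_exp SB - GL_ind)"
proof -
  note Mp = M
  interpret prob_space M by (rule M)
  note [measurable] = X_meas Y_meas
  have fm[measurable]: "(\<lambda>x. f x k) \<in> borel_measurable MX" for k using f_meas by auto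
  have Rm[measurable]: "R k \<in> measurable MX (count_space UNIV)" for k using R_meas by auto
  have binm[measurable]: "bin k \<in> measurable borel (count_space UNIV)" for k using bin_meas by auto
  have Sm[measurable]: "S k \<in> borel_measurable M" for k unfolding S_def by measurable
  have SRm: "(\<lambda>\<omega>. (S k \<omega>, R k (X \<omega>))) \<in> measurable M (borel \<Otimes>\<^sub>M count_space UNIV)" for k
    by measurable
  define G where "G = (\<lambda>k j. let A = {\<omega>'\<in>space M. bin k (S k \<omega>') = j}
      in (\<integral>\<omega>'. indicator A \<omega>' * S k \<omega>' \<partial>M) / measure M A)"
  have SBeq: "SB k \<omega> = G k (bin k (S k \<omega>))" for k \<omega>
    unfolding SB_def binned_def G_def by simp
  have gm: "(\<lambda>t. G k (bin k t)) \<in> borel_measurable borel" for k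
    by (rule measurable_compose[OF binm]) simp
  have SBm[measurable]: "SB k \<in> borel_measurable M" for k
  proof -
    have "(\<lambda>\<omega>. G k (bin k (S k \<omega>))) \<in> borel_measurable M"
      using measurable_compose[OF Sm gm] .
    then show ?thesis unfolding SBeq[abs_def] by simp
  qed
  have SBRm: "(\<lambda>\<omega>. (SB k \<omega>, R k (X \<omega>))) \<in> measurable M (borel \<Otimes>\<^sub>M count_space UNIV)" for k
    by measurable
  have Ind: "(\<lambda>\<omega>. if Y \<omega> = k then 1 else 0 :: real) \<in> borel_measurable M" for k
    by measurable
  have Q01: "AE x in M. Q k x \<in> {0..1}" for k
    unfolding Q_def by (rule cexp01[OF M X_meas Ind]) auto
  have Qm: "Q k \<in> borel_measurable M" for k unfolding Q_def by (rule cexp_meas[OF M X_meas])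
  have iQ: "integrable M (Q k)" for k by (rule int01[OF M Qm Q01])
  have C01: "AE x in M. C k x \<in> {0..1}" for k
    unfolding C_def by (rule cexp01[OF M Sm Qm Q01])
  have Cm: "C k \<in> borel_measurable M" for k unfolding C_def by (rule cexp_meas[OF M Sm])
  have iC: "integrable M (C k)" for k by (rule int01[OF M Cm C01])
  have QS01: "AE x in M. QTR S k x \<in> {0..1}" for k
    unfolding QTR_def by (rule cexp01[OF M SRm Qm Q01])
  have QSm: "QTR S k \<in> borel_measurable M" for k unfolding QTR_def by (rule cexp_meas[OF M SRm])
  have QB01: "AE x in M. QTR SB k x \<in> {0..1}" for k
    unfolding QTR_def by (rule cexp01[OF M SBRm Qm Q01])
  have QBm: "QTR SB k \<in> borel_measurable M" for k unfolding QTR_def by (rule cexp_meas[OF M SBRm])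
  have fstm: "fst \<in> measurable (borel \<Otimes>\<^sub>M count_space UNIV) (borel :: real measure)" by simp
  have t1: "AE x in M. cexp M (S k) borel (QTR S k) x = C k x" for k
    unfolding QTR_def C_def by (rule cexp_tower[OF M SRm fstm _ iQ]) simp
  have t2: "AE x in M. cexp M (SB k) borel (C k) x = cexp M (SB k) borel (Q k) x" for k
    unfolding C_def by (rule cexp_tower[OF M Sm gm SBeq iQ])
  have t3: "AE x in M. cexp M (SB k) borel (QTR SB k) x = cexp M (SB k) borel (Q k) x" for k
    unfolding QTR_def by (rule cexp_tower[OF M SBRm fstm _ iQ]) simp
  have I1: "integrable M (\<lambda>\<omega>. h k (Q k \<omega>))" for k using integr by blast
  have I2: "integrable M (\<lambda>\<omega>. h k (C k \<omega>))" for k using integr by blast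
  have I3: "integrable M (\<lambda>\<omega>. h k (cexp M (SB k) borel (Q k) \<omega>))" for k using integr by blast
  have I4: "integrable M (\<lambda>\<omega>. h k (QTR S k \<omega>))" for k using integr by blast
  have I5: "integrable M (\<lambda>\<omega>. h k (QTR SB k \<omega>))" for k using integr by blast
  have I6: "integrable M (\<lambda>\<omega>. h k (cexp M (S k) borel (QTR S k) \<omega>))" for k using integr by blast
  have I7: "integrable M (\<lambda>\<omega>. h k (cexp M (SB k) borel (QTR SB k) \<omega>))" for k using integr by blast
  have I8: "integrable M (\<lambda>\<omega>. h k (cexp M (SB k) borel (C k) \<omega>))" for k using integr by blast
  have E6: "(\<integral>\<omega>. h k (cexp M (S k) borel (QTR S k) \<omega>) \<partial>M) = (\<integral>\<omega>. h k (C k \<omega>) \<partial>M)" for k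
    by (rule integral_cong_AE) (use I6[of k] I2[of k] t1[of k] in auto)
  have E7: "(\<integral>\<omega>. h k (cexp M (SB k) borel (QTR SB k) \<omega>) \<partial>M) = (\<integral>\<omega>. h k (cexp M (SB k) borel (Q k) \<omega>) \<partial>M)" for k
    by (rule integral_cong_AE) (use I7[of k] I3[of k] t3[of k] in auto)
  have E8: "(\<integral>\<omega>. h k (cexp M (SB k) borel (C k) \<omega>) \<partial>M) = (\<integral>\<omega>. h k (cexp M (SB k) borel (Q k) \<omega>) \<partial>M)" for k
    by (rule integral_cong_AE) (use I8[of k] I3[of k] t2[of k] in auto)
  define a where "a = (\<lambda>k. \<integral>\<omega>. h k (Q k \<omega>) \<partial>M)"
  define c where "c = (\<lambda>k. \<integral>\<omega>. h k (C k \<omega>) \<partial>M)"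
  define b where "b = (\<lambda>k. \<integral>\<omega>. h k (cexp M (SB k) borel (Q k) \<omega>) \<partial>M)"
  define qs where "qs = (\<lambda>k. \<integral>\<omega>. h k (QTR S k \<omega>) \<partial>M)"
  define qb where "qb = (\<lambda>k. \<integral>\<omega>. h k (QTR SB k \<omega>) \<partial>M)"
  have e1: "(\<integral>\<omega>. cvar M (h k) (Q k) (S k) borel \<omega> \<partial>M) = a k - c k" for k
    unfolding a_def c_def C_def by (rule int_cvar[where h="h k" and U="Q k", OF M Sm[of k] I1[of k]]) (use I2 in \<open>simp add: C_def\<close>)
  have e2: "(\<integral>\<omega>. cvar M (h k) (QTR S k) (S k) borel \<omega> \<partial>M) = qs k - c k" for k
    unfolding qs_def c_def E6[symmetric] by (rule int_cvar[where h="h k" and U="QTR S k", OF M Sm[of k] I4[of k] I6[of k]])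
  have e3: "(\<integral>\<omega>. cvar M (h k) (Q k) (\<lambda>\<omega>. (S k \<omega>, R k (X \<omega>))) (borel \<Otimes>\<^sub>M count_space UNIV) \<omega> \<partial>M) = a k - qs k" for k
    unfolding a_def qs_def QTR_def by (rule int_cvar[where h="h k" and U="Q k", OF M SRm[of k] I1[of k]]) (use I4 in \<open>simp add: QTR_def\<close>)
  have e4: "(\<integral>\<omega>. cvar M (h k) (Q k) (SB k) borel \<omega> \<partial>M) = a k - b k" for k
    unfolding a_def b_def by (rule int_cvar[where h="h k" and U="Q k", OF M SBm[of k] I1[of k] I3[of k]])
  have e5: "(\<integral>\<omega>. cvar M (h k) (C k) (SB k) borel \<omega> \<partial>M) = c k - b k" for k
    unfolding c_def b_def E8[symmetric] by (rule int_cvar[where h="h k" and U="C k", OF M SBm[of k] I2[of k] I8[of k]])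
  have e6: "(\<integral>\<omega>. cvar M (h k) (QTR SB k) (SB k) borel \<omega> \<partial>M) = qb k - b k" for k
    unfolding qb_def b_def E7[symmetric] by (rule int_cvar[where h="h k" and U="QTR SB k", OF M SBm[of k] I5[of k] I7[of k]])
  have e7: "(\<integral>\<omega>. cvar M (h k) (Q k) (\<lambda>\<omega>. (SB k \<omega>, R k (X \<omega>))) (borel \<Otimes>\<^sub>M count_space UNIV) \<omega> \<partial>M) = a k - qb k" for k
    unfolding a_def qb_def QTR_def by (rule int_cvar[where h="h k" and U="Q k", OF M SBRm[of k] I1[of k]]) (use I5 in \<open>simp add: QTR_def\<close>)
  have GS: "GL_S = (\<Sum>k\<in>UNIV. a k - c k)" using GL_decomp e1 by simp
  have GeS: "GL_exp S = (\<Sum>k\<in>UNIV. qs k - c k)" unfolding GL_exp_def using e2 by simp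
  have GrS: "GL_res S = (\<Sum>k\<in>UNIV. a k - qs k)" unfolding GL_res_def using e3 by simp
  have GSB: "GL_SB = (\<Sum>k\<in>UNIV. a k - b k)" unfolding GL_SB_def using e4 by simp
  have Gi: "GL_ind = (\<Sum>k\<in>UNIV. c k - b k)" unfolding GL_ind_def using e5 by simp
  have GeB: "GL_exp SB = (\<Sum>k\<in>UNIV. qb k - b k)" unfolding GL_exp_def using e6 by simp
  have GrB: "GL_res SB = (\<Sum>k\<in>UNIV. a k - qb k)" unfolding GL_res_def using e7 by simp
  have P1: "GL_S = GL_exp S + GL_res S"
    unfolding GS GeS GrS sum.distrib[symmetric] by (rule sum.cong) auto
  have P2: "GL_SB = GL_S + GL_ind"
    unfolding GS GSB Gi sum.distrib[symmetric] by (rule sum.cong) auto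
  have P3: "GL_S = GL_exp SB - GL_ind + GL_res SB"
    unfolding GS GeB Gi GrB sum.distrib[symmetric] sum_subtractf[symmetric] by (rule sum.cong) auto
  have P4: "GL_S \<ge> GL_exp S \<and> GL_exp S \<ge> 0 \<and> GL_ind \<ge> 0 \<and> GL_S \<ge> GL_exp SB - GL_ind"
    if cv: "\<forall>k. convex_on {0..1} (h k)"
  proof -
    have j1: "qs k \<le> a k" for k
      unfolding qs_def a_def QTR_def
      by (rule jensen_cexp[where h="h k" and U="Q k", OF M SRm[of k] Qm[of k] Q01[of k]]) (use cv I1 I4 in \<open>auto simp: QTR_def\<close>)
    have j2: "c k \<le> qs k" for k
      unfolding qs_def c_def E6[symmetric]
      by (rule jensen_cexp[where h="h k" and U="QTR S k", OF M Sm[of k] QSm[of k] QS01[of k]]) (use cv I4 I6 in auto)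
    have j3: "b k \<le> c k" for k
      unfolding b_def c_def E8[symmetric]
      by (rule jensen_cexp[where h="h k" and U="C k", OF M SBm[of k] Cm[of k] C01[of k]]) (use cv I2 I8 in auto)
    have j4: "qb k \<le> a k" for k
      unfolding qb_def a_def QTR_def
      by (rule jensen_cexp[where h="h k" and U="Q k", OF M SBRm[of k] Qm[of k] Q01[of k]]) (use cv I1 I5 in \<open>auto simp: QTR_def\<close>)
    have "GL_res S \<ge> 0" unfolding GrS by (rule sum_nonneg) (use j1 in auto)
    moreover have "GL_exp S \<ge> 0" unfolding GeS by (rule sum_nonneg) (use j2 in auto)
    moreover have "GL_ind \<ge> 0" unfolding Gi by (rule sum_nonneg) (use j3 in auto)
    moreover have "GL_res SB \<ge> 0" unfolding GrB by (rule sum_nonneg) (use j4 in auto)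
    ultimately show ?thesis using P1 P3 by linarith
  qed
  show ?thesis using P1 P2 P3 P4 by blast
qed


end
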